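(* Let $N\ge1$, integers $y_1<\cdots<y_N$, an integer $M$ and $t\ge0$. For TASEP started with particles at $y_1,\dots,y_N$, the probability that the leftmost particle has made at least $M$ jumps by time $t$ is $$\mathbb{P}[x_1\ge y_1+M]=\sum_{y_1+M\le x_1<x_2<\cdots<x_N}P(x_1,\dots,x_N;t\,|\,y_1,\dots,y_N;0)=\det\big[F_{k-j+1}(y_1-y_j+M+k-1;t)\big]_{j,k=1}^N .$$
   Context: TASEP on $\mathbb{Z}$: each particle independently jumps one site to the right at rate 1 provided the target site is empty; particles labelled $1,\dots,N$ from left to right, particle $j$ starting at $y_j$; $x_j$ denotes the position of particle $j$ at time $t$. $P(x_1,\dots,x_N;t|y_1,\dots,y_N;0)$ is the transition probability (Green function) from $(y_j)$ to $(x_j)$ in time $t$. For integers $n,m$ and $t\ge0$: $F_n(m;t)=e^{-t}\sum_{k\ge0}\frac{(n)_k t^{m+k}}{k!(m+k)!}$ with $(n)_k=n(n+1)\cdots(n+k-1)$, $(n)_0=1$, and $1/(m+k)!:=0$ for $m+k<0$. *)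

theory Defs
  imports "HOL-Analysis.Infinite_Sum" "Jordan_Normal_Form.Determinant"
begin

text \<open>Configurations of N TASEP particles: lists of length N, entry j (0-based) is the
position of particle j+1.  Particle j may jump iff the site to its right is empty.\<close>

definition can_jump :: "int list \<Rightarrow> nat \<Rightarrow> bool" where
  "can_jump xs j \<longleftrightarrow> j < length xs \<and> (Suc j = length xs \<or> xs ! Suc j > xs ! j + 1)"

definition jump :: "int list \<Rightarrow> nat \<Rightarrow> int list" where
  "jump xs j = xs[j := xs ! j + 1]"

text \<open>Powers of the generator Q of TASEP (rate 1 jumps): Qpow n y x = (Q^n)(y,x),
computed via (Q f)(y) = sum over allowed jumps j of (f(jump y j) - f(y)).\<close>

fun Qpow :: "nat \<Rightarrow> int list \<Rightarrow> int list \<Rightarrow> real" where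
  "Qpow 0 y x = (if x = y then 1 else 0)"
| "Qpow (Suc n) y x =
     (\<Sum>j<length y. if can_jump y j then Qpow n (jump y j) x - Qpow n y x else 0)"

definition tasep_P :: "int list \<Rightarrow> real \<Rightarrow> int list \<Rightarrow> real" where
  "tasep_P x t y = (\<Sum>n. t ^ n / fact n * Qpow n y x)"

definition F :: "int \<Rightarrow> int \<Rightarrow> real \<Rightarrow> real" where
  "F n m t = exp (- t) *
     (\<Sum>k. pochhammer (real_of_int n) k / fact k *
           (if m + int k \<ge> 0 then t ^ nat (m + int k) / fact (nat (m + int k)) else 0))"

end

theory Submission imports "HOL-Analysis.FPS_Convergence" Defs begin

definition psi :: "int \<Rightarrow> int \<Rightarrow> nat \<Rightarrow> real" where
  "psi n m r = (if m \<le> int r then pochhammer (real_of_int n) (nat (int r - m)) / fact (nat (int r - m)) / fact r else 0)"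

definition Phi :: "int \<Rightarrow> int \<Rightarrow> real fps" where
  "Phi n m = fps_exp (-1) * Abs_fps (psi n m)"

lemma cancel_aux: "(c::real) \<noteq> 0 \<Longrightarrow> c * (a / (c * d)) = a / d"
  by (cases "d = 0") (simp_all add: field_simps)

lemma aux2:
  assumes "(f::real) > 0" "(k::real) \<ge> 0"
  shows "P * (x + k) / ((k + 1) * f) = P / f + (x - 1) * P / ((k + 1) * f)"
proof -
  have q: "(k + 1) * f > 0" using assms by simp
  have "P / f = P * (k + 1) / ((k + 1) * f)" using assms by simp
  then have "P / f + (x - 1) * P / ((k + 1) * f) = (P * (k + 1) + (x - 1) * P) / ((k + 1) * f)"
    by (simp add: add_divide_distrib)
  also have "P * (k + 1) + (x - 1) * P = P * (x + k)" by (simp add: algebra_simps)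
  finally show ?thesis by simp
qed

lemma poch_id:
  "pochhammer (x::real) (Suc k) / fact (Suc k) = pochhammer x k / fact k + pochhammer (x - 1) (Suc k) / fact (Suc k)"
proof -
  have a: "pochhammer (x - 1) (Suc k) = (x - 1) * pochhammer x k"
    by (simp add: pochhammer_rec)
  have b: "pochhammer x (Suc k) = pochhammer x k * (x + of_nat k)"
    by (simp add: pochhammer_Suc)
  have c: "(fact (Suc k) :: real) = (of_nat k + 1) * fact k" by simp
  show ?thesis unfolding a b c by (rule aux2) simp_all
qed

lemma pochhammer_nonneg0: "(x::real) \<ge> 0 \<Longrightarrow> pochhammer x k \<ge> 0"
  by (induction k) (auto simp: pochhammer_Suc)

lemma psi_rec: "psi n m r = psi n (m + 1) r + psi (n - 1) m r"
proof (cases "m \<le> int r")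
  case True
  show ?thesis
  proof (cases "m = int r")
    case True
    then show ?thesis by (simp add: psi_def)
  next
    case False
    with True obtain k where k: "nat (int r - m) = Suc k" "nat (int r - (m + 1)) = k"
      by (intro that[of "nat (int r - m - 1)"]) auto
    have T2: "m + 1 \<le> int r" using True False by simp
    have A: "psi n m r = pochhammer (real_of_int n) (Suc k) / fact (Suc k) / fact r"
      by (simp only: psi_def if_P[OF True] k(1))
    have B: "psi n (m + 1) r = pochhammer (real_of_int n) k / fact k / fact r"
      by (simp only: psi_def if_P[OF T2] k(2))
    have C: "psi (n - 1) m r = pochhammer (real_of_int (n - 1)) (Suc k) / fact (Suc k) / fact r"
      by (simp only: psi_def if_P[OF True] k(1))
    have C': "real_of_int (n - 1) = real_of_int n - 1" by simp
    note P = poch_id[of "real_of_int n" k]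
    show ?thesis unfolding A B C C' P add_divide_distrib ..
  qed
next
  case False
  then show ?thesis by (simp add: psi_def)
qed

lemma psi_deriv: "of_nat (Suc r) * psi n m (Suc r) = psi n (m - 1) r"
proof (cases "m \<le> int r + 1")
  case True
  have e: "nat (int (Suc r) - m) = nat (int r - (m - 1))" by simp
  have T1: "m \<le> int (Suc r)" and T2: "m - 1 \<le> int r" using True by simp_all
  have c: "(fact (Suc r) :: real) = of_nat (Suc r) * fact r" by (simp only: fact_Suc of_nat_mult)
  have nz: "(of_nat (Suc r) :: real) \<noteq> 0" by (simp only: of_nat_eq_0_iff)
  show ?thesis
    unfolding psi_def if_P[OF T1] if_P[OF T2] e c cancel_aux[OF nz] ..
next
  case False
  then show ?thesis by (simp add: psi_def)
qed

lemma Phi_rec: "Phi n m = Phi n (m + 1) + Phi (n - 1) m"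
proof -
  have "Abs_fps (psi n m) = Abs_fps (psi n (m + 1)) + Abs_fps (psi (n - 1) m)"
    by (rule fps_ext) (simp add: psi_rec[of n m])
  then show ?thesis unfolding Phi_def by (simp add: distrib_left)
qed

lemma Phi_deriv: "fps_deriv (Phi n m) = Phi n (m - 1) - Phi n m"
proof -
  have d: "fps_deriv (Abs_fps (psi n m)) = Abs_fps (psi n (m - 1))"
    by (rule fps_ext) (simp add: fps_deriv_nth psi_deriv[symmetric])
  have m1: "fps_const (- 1 :: real) = - 1" by (rule fps_ext) simp
  show ?thesis unfolding Phi_def fps_deriv_mult d fps_exp_deriv m1
    by (simp add: algebra_simps)
qed

lemma abs_poch: "\<bar>pochhammer (x::real) k\<bar> \<le> pochhammer \<bar>x\<bar> k"
proof (induction k)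
  case (Suc k)
  have "\<bar>pochhammer x (Suc k)\<bar> = \<bar>pochhammer x k\<bar> * \<bar>x + of_nat k\<bar>"
    by (simp add: pochhammer_Suc abs_mult)
  also have "\<dots> \<le> pochhammer \<bar>x\<bar> k * (\<bar>x\<bar> + of_nat k)"
    by (intro mult_mono Suc) (auto simp: pochhammer_nonneg0)
  finally show ?case by (simp add: pochhammer_Suc)
qed simp

lemma poch_fact_bound: "(c::real) \<ge> 0 \<Longrightarrow> pochhammer c k / fact k \<le> (c + 1) ^ k"
proof (induction k)
  case (Suc k)
  have "pochhammer c (Suc k) / fact (Suc k) = (pochhammer c k / fact k) * ((c + of_nat k) / (of_nat k + 1))"
    by (simp add: pochhammer_Suc field_simps)
  also have "\<dots> \<le> (c + 1) ^ k * (c + 1)"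
  proof (intro mult_mono Suc)
    show "(c + of_nat k) / (of_nat k + 1) \<le> c + 1" using Suc.prems
      by (simp add: field_simps)
  qed (use Suc.prems in \<open>auto simp: pochhammer_nonneg0\<close>)
  finally show ?case by (simp add: mult.commute)
qed simp

lemma psi_bound:
  "\<bar>psi n m r\<bar> \<le> (\<bar>real_of_int n\<bar> + 1) ^ nat \<bar>m\<bar> * (\<bar>real_of_int n\<bar> + 1) ^ r / fact r"
proof (cases "m \<le> int r")
  case True
  let ?B = "\<bar>real_of_int n\<bar> + 1"
  let ?k = "nat (int r - m)"
  have "\<bar>psi n m r\<bar> = \<bar>pochhammer (real_of_int n) ?k\<bar> / fact ?k / fact r"
    using True by (simp add: psi_def abs_divide)
  also have "\<dots> \<le> pochhammer \<bar>real_of_int n\<bar> ?k / fact ?k / fact r"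
    by (intro divide_right_mono abs_poch) auto
  also have "\<dots> \<le> ?B ^ ?k / fact r"
    by (intro divide_right_mono poch_fact_bound) auto
  also have "?B ^ ?k / fact r \<le> ?B ^ (nat \<bar>m\<bar> + r) / fact r"
    by (intro divide_right_mono power_increasing) auto
  finally show ?thesis by (simp add: power_add)
qed (simp add: psi_def)

lemma summable_expo: "summable (\<lambda>r. (x::real) ^ r / fact r)"
  using summable_exp[of x] by (simp add: field_simps)

lemma radius_psi: "fps_conv_radius (Abs_fps (psi n m)) = \<infinity>"
  unfolding fps_conv_radius_def
proof (rule conv_radius_inftyI'')
  fix z :: real
  let ?B = "\<bar>real_of_int n\<bar> + 1"
  have S: "summable (\<lambda>r. ?B ^ nat \<bar>m\<bar> * ((?B * \<bar>z\<bar>) ^ r / fact r))"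
    by (intro summable_mult summable_expo)
  have Bd: "norm (fps_nth (Abs_fps (psi n m)) r * z ^ r) \<le> ?B ^ nat \<bar>m\<bar> * ((?B * \<bar>z\<bar>) ^ r / fact r)" for r
  proof -
    have "norm (fps_nth (Abs_fps (psi n m)) r * z ^ r) = \<bar>psi n m r\<bar> * \<bar>z\<bar> ^ r"
      by (simp add: abs_mult power_abs)
    also have "\<dots> \<le> (?B ^ nat \<bar>m\<bar> * ?B ^ r / fact r) * \<bar>z\<bar> ^ r"
      by (intro mult_right_mono psi_bound) auto
    also have "\<dots> = ?B ^ nat \<bar>m\<bar> * ((?B * \<bar>z\<bar>) ^ r / fact r)"
      by (simp add: power_mult_distrib)
    finally show ?thesis .
  qed
  show "summable (\<lambda>r. fps_nth (Abs_fps (psi n m)) r * z ^ r)"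
    by (rule summable_comparison_test'[OF S, where N = 0]) (rule Bd)
qed

lemma radius_Phi: "fps_conv_radius (Phi n m) = \<infinity>"
proof -
  have "fps_conv_radius (Phi n m) \<ge> min (fps_conv_radius (fps_exp (-1::real))) (fps_conv_radius (Abs_fps (psi n m)))"
    unfolding Phi_def by (rule fps_conv_radius_mult)
  then show ?thesis by (simp add: radius_psi)
qed

lemma eval_Phi: "eval_fps (Phi n m) t = F n m t"
proof -
  let ?g = "\<lambda>k. pochhammer (real_of_int n) k / fact k *
           (if m + int k \<ge> 0 then t ^ nat (m + int k) / fact (nat (m + int k)) else 0)"
  let ?h = "\<lambda>r. psi n m r * t ^ r"
  have hs: "?h sums eval_fps (Abs_fps (psi n m)) t"
    using sums_eval_fps[of t "Abs_fps (psi n m)"] by (simp add: radius_psi)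
  have gs: "?g sums eval_fps (Abs_fps (psi n m)) t"
  proof (cases "m \<ge> 0")
    case True
    define d where "d = nat m"
    have z: "sum ?h {..<d} = 0"
      by (intro sum.neutral) (auto simp: psi_def d_def)
    have "(\<lambda>i. ?h (i + d)) sums eval_fps (Abs_fps (psi n m)) t"
      using hs by (subst sums_iff_shift) (simp add: z)
    moreover have "(\<lambda>i. ?h (i + d)) = ?g"
    proof
      fix k
      have e1: "nat (int (k + d) - m) = k" and e2: "nat (m + int k) = k + d"
        using True by (auto simp: d_def)
      show "?h (k + d) = ?g k" using True
        by (simp add: psi_def e1 e2 d_def)
    qed
    ultimately show ?thesis by simp
  next
    case False
    define d where "d = nat (- m)"
    have z: "sum ?g {..<d} = 0"
      by (intro sum.neutral) (auto simp: d_def)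
    have "(\<lambda>i. ?g (i + d)) = ?h"
    proof
      fix k
      have e1: "nat (int k - m) = k + d" and e2: "nat (m + int (k + d)) = k"
        using False by (auto simp: d_def)
      show "?g (k + d) = ?h k" using False
        by (simp add: psi_def e1 e2 d_def)
    qed
    with hs have "(\<lambda>i. ?g (i + d)) sums eval_fps (Abs_fps (psi n m)) t" by simp
    then have "?g sums (eval_fps (Abs_fps (psi n m)) t + sum ?g {..<d})"
      using sums_iff_shift[of ?g d] by blast
    then show ?thesis by (simp only: z add_0_right)
  qed
  have "eval_fps (Phi n m) t = exp (- t) * eval_fps (Abs_fps (psi n m)) t"
    unfolding Phi_def by (subst eval_fps_mult) (simp_all add: radius_psi)
  also have "\<dots> = F n m t"
    unfolding F_def using gs by (simp add: sums_iff)
  finally show ?thesis .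
qed


definition Ldet :: "nat \<Rightarrow> (nat \<Rightarrow> nat \<Rightarrow> 'a::comm_ring_1) \<Rightarrow> 'a" where
  "Ldet n f = (\<Sum>p\<in>{p. p permutes {0..<n}}. signof p * (\<Prod>i=0..<n. f i (p i)))"

lemma Ldet_det: "det (mat n n (\<lambda>(i,j). f i j)) = Ldet n f"
proof -
  have "det (mat n n (\<lambda>(i,j). f i j)) =
    (\<Sum>p\<in>{p. p permutes {0..<n}}. signof p * (\<Prod>i=0..<n. mat n n (\<lambda>(i,j). f i j) $$ (i, p i)))"
    unfolding det_def by simp
  also have "\<dots> = Ldet n f"
    unfolding Ldet_def
  proof (intro sum.cong refl arg_cong[where f = "\<lambda>x. _ * x"] prod.cong)
    fix p i assume p: "p \<in> {p. p permutes {0..<n}}" and i: "i \<in> {0..<n}"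
    then have "p i < n" using permutes_in_image[of p "{0..<n}" i] by auto
    then show "mat n n (\<lambda>(i,j). f i j) $$ (i, p i) = f i (p i)" using i by simp
  qed
  finally show ?thesis .
qed

lemma Ldet_upd:
  assumes "i < n"
  shows "Ldet n (f(i := g)) = (\<Sum>p\<in>{p. p permutes {0..<n}}. signof p * (g (p i) * (\<Prod>j\<in>{0..<n}-{i}. f j (p j))))"
  unfolding Ldet_def
proof (intro sum.cong refl arg_cong[where f = "\<lambda>x. _ * x"])
  fix p
  have "(\<Prod>j=0..<n. (f(i := g)) j (p j)) = (f(i := g)) i (p i) * (\<Prod>j\<in>{0..<n}-{i}. (f(i := g)) j (p j))"
    by (rule prod.remove) (use assms in auto)
  also have "(\<Prod>j\<in>{0..<n}-{i}. (f(i := g)) j (p j)) = (\<Prod>j\<in>{0..<n}-{i}. f j (p j))"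
    by (intro prod.cong) auto
  finally show "(\<Prod>j=0..<n. (f(i := g)) j (p j)) = g (p i) * (\<Prod>j\<in>{0..<n}-{i}. f j (p j))" by simp
qed

lemma Ldet_add:
  assumes "i < n"
  shows "Ldet n (f(i := (\<lambda>k. u k + v k))) = Ldet n (f(i := u)) + Ldet n (f(i := v))"
  unfolding Ldet_upd[OF assms] sum.distrib[symmetric]
  by (intro sum.cong refl) (simp add: algebra_simps)

lemma Ldet_diff:
  assumes "i < n"
  shows "Ldet n (f(i := (\<lambda>k. u k - v k))) = Ldet n (f(i := u)) - Ldet n (f(i := v))"
  unfolding Ldet_upd[OF assms] sum_subtractf[symmetric]
  by (intro sum.cong refl) (simp add: algebra_simps)

lemma Ldet_ident:
  assumes "i < n" "j < n" "i \<noteq> j" "f i = f j"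
  shows "Ldet n f = 0"
proof -
  let ?A = "mat n n (\<lambda>(i,j). f i j)"
  have "Matrix.row ?A i = Matrix.row ?A j"
    by (rule eq_vecI) (use assms in auto)
  then have "det ?A = 0"
    by (intro det_identical_rows[of ?A n i j]) (use assms in auto)
  then show ?thesis by (simp add: Ldet_det)
qed

lemma fps_deriv_prod_gen:
  fixes g :: "'i \<Rightarrow> 'a::comm_ring_1 fps"
  assumes "finite S"
  shows "fps_deriv (\<Prod>j\<in>S. g j) = (\<Sum>i\<in>S. \<Prod>j\<in>S. if j = i then fps_deriv (g j) else g j)"
  using assms
proof (induction S rule: finite_induct)
  case empty
  then show ?case by simp
next
  case (insert x S)
  have a: "(\<Prod>j\<in>insert x S. if j = x then fps_deriv (g j) else g j) = fps_deriv (g x) * (\<Prod>j\<in>S. g j)"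
  proof -
    have "(\<Prod>j\<in>S. if j = x then fps_deriv (g j) else g j) = prod g S"
      using insert.hyps by (intro prod.cong) auto
    then show ?thesis using insert.hyps by simp
  qed
  have b: "(\<Prod>j\<in>insert x S. if j = i then fps_deriv (g j) else g j) =
           g x * (\<Prod>j\<in>S. if j = i then fps_deriv (g j) else g j)" if "i \<in> S" for i
    using insert that by (subst prod.insert) auto
  have "(\<Sum>i\<in>insert x S. \<Prod>j\<in>insert x S. if j = i then fps_deriv (g j) else g j) =
        fps_deriv (g x) * (\<Prod>j\<in>S. g j) + (\<Sum>i\<in>S. g x * (\<Prod>j\<in>S. if j = i then fps_deriv (g j) else g j))"
  proof -
    have "(\<Sum>i\<in>insert x S. \<Prod>j\<in>insert x S. if j = i then fps_deriv (g j) else g j) =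
      (\<Prod>j\<in>insert x S. if j = x then fps_deriv (g j) else g j) +
      (\<Sum>i\<in>S. \<Prod>j\<in>insert x S. if j = i then fps_deriv (g j) else g j)"
      by (rule sum.insert) (use insert.hyps in auto)
    also have "(\<Sum>i\<in>S. \<Prod>j\<in>insert x S. if j = i then fps_deriv (g j) else g j) =
       (\<Sum>i\<in>S. g x * (\<Prod>j\<in>S. if j = i then fps_deriv (g j) else g j))"
      by (rule sum.cong[OF refl b])
    finally show ?thesis unfolding a .
  qed
  also have "\<dots> = fps_deriv (\<Prod>j\<in>insert x S. g j)"
    using insert by (simp add: sum_distrib_left[symmetric] algebra_simps)
  finally show ?case by simp
qed

lemma Ldet_deriv:
  fixes f :: "nat \<Rightarrow> nat \<Rightarrow> 'a::comm_ring_1 fps"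
  shows "fps_deriv (Ldet n f) = (\<Sum>i\<in>{0..<n}. Ldet n (f(i := (\<lambda>k. fps_deriv (f i k)))))"
proof -
  have "fps_deriv (Ldet n f) =
     (\<Sum>p\<in>{p. p permutes {0..<n}}. signof p * (\<Sum>i\<in>{0..<n}. \<Prod>j\<in>{0..<n}. if j = i then fps_deriv (f j (p j)) else f j (p j)))"
    unfolding Ldet_def fps_deriv_sum
    by (intro sum.cong refl) (simp add: fps_deriv_prod_gen)
  also have "\<dots> = (\<Sum>i\<in>{0..<n}. \<Sum>p\<in>{p. p permutes {0..<n}}. signof p * (\<Prod>j\<in>{0..<n}. if j = i then fps_deriv (f j (p j)) else f j (p j)))"
    by (subst sum.swap) (simp add: sum_distrib_left)
  also have "\<dots> = (\<Sum>i\<in>{0..<n}. Ldet n (f(i := (\<lambda>k. fps_deriv (f i k)))))"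
    unfolding Ldet_def
    by (intro sum.cong refl arg_cong[where f = "\<lambda>x. _ * x"] prod.cong) auto
  finally show ?thesis .
qed

lemma radius_inf_add:
  fixes f g :: "real fps"
  shows "fps_conv_radius f = \<infinity> \<Longrightarrow> fps_conv_radius g = \<infinity> \<Longrightarrow> fps_conv_radius (f + g) = \<infinity>"
  using fps_conv_radius_add[of f g] by simp

lemma radius_inf_mult:
  fixes f g :: "real fps"
  shows "fps_conv_radius f = \<infinity> \<Longrightarrow> fps_conv_radius g = \<infinity> \<Longrightarrow> fps_conv_radius (f * g) = \<infinity>"
  using fps_conv_radius_mult[of f g] by simp

lemma eval_sum_fps:
  fixes f :: "'i \<Rightarrow> real fps"
  assumes "\<And>i. i \<in> S \<Longrightarrow> fps_conv_radius (f i) = \<infinity>"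
  shows "fps_conv_radius (sum f S) = \<infinity> \<and> eval_fps (sum f S) t = (\<Sum>i\<in>S. eval_fps (f i) t)"
proof (cases "finite S")
  case True
  then show ?thesis using assms
    by (induction S rule: finite_induct) (auto simp: eval_fps_add radius_inf_add)
qed simp

lemma eval_prod_fps:
  fixes f :: "'i \<Rightarrow> real fps"
  assumes "\<And>i. i \<in> S \<Longrightarrow> fps_conv_radius (f i) = \<infinity>"
  shows "fps_conv_radius (prod f S) = \<infinity> \<and> eval_fps (prod f S) t = (\<Prod>i\<in>S. eval_fps (f i) t)"
proof (cases "finite S")
  case True
  then show ?thesis using assms
    by (induction S rule: finite_induct) (auto simp: eval_fps_mult radius_inf_mult)
qed simp

lemma eval_Ldet:
  fixes f :: "nat \<Rightarrow> nat \<Rightarrow> real fps"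
  assumes "\<And>i j. fps_conv_radius (f i j) = \<infinity>"
  shows "fps_conv_radius (Ldet n f) = \<infinity> \<and> eval_fps (Ldet n f) t = Ldet n (\<lambda>i j. eval_fps (f i j) t)"
proof -
  have trm: "fps_conv_radius (signof p * (\<Prod>i=0..<n. f i (p i))) = \<infinity> \<and>
      eval_fps (signof p * (\<Prod>i=0..<n. f i (p i))) t = signof p * (\<Prod>i=0..<n. eval_fps (f i (p i)) t)" for p
  proof -
    have P: "fps_conv_radius (\<Prod>i=0..<n. f i (p i)) = \<infinity> \<and>
             eval_fps (\<Prod>i=0..<n. f i (p i)) t = (\<Prod>i=0..<n. eval_fps (f i (p i)) t)"
      by (rule eval_prod_fps) (rule assms)
    have s: "(signof p :: real fps) = fps_const (signof p)"
      by (simp add: fps_of_int)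
    show ?thesis unfolding s using P
      by (auto simp: eval_fps_mult radius_inf_mult)
  qed
  show ?thesis unfolding Ldet_def
    using eval_sum_fps[of "{p. p permutes {0..<n}}" "\<lambda>p. signof p * (\<Prod>i=0..<n. f i (p i))" t] trm
    by simp
qed


lemma has_sum_sum_fin:
  fixes f :: "'i \<Rightarrow> 'a \<Rightarrow> real"
  assumes "finite I" "\<And>i. i \<in> I \<Longrightarrow> (f i has_sum s i) A"
  shows "((\<lambda>x. \<Sum>i\<in>I. f i x) has_sum (\<Sum>i\<in>I. s i)) A"
  using assms by (induction I rule: finite_induct) (auto intro!: has_sum_add)

lemma has_sum_diff':
  fixes f g :: "'a \<Rightarrow> real"
  assumes "(f has_sum a) A" "(g has_sum b) A"
  shows "((\<lambda>x. f x - g x) has_sum (a - b)) A"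
proof -
  have "((\<lambda>x. - g x) has_sum (- b)) A" using assms(2) by (simp add: has_sum_uminus)
  from has_sum_add[OF assms(1) this] show ?thesis by simp
qed

lemma length_jump[simp]: "length (jump xs j) = length xs"
  by (simp add: jump_def)

lemma sorted_jump:
  assumes s: "sorted_wrt (<) xs" and c: "can_jump xs j"
  shows "sorted_wrt (<) (jump xs j)"
proof -
  have jl: "j < length xs" using c by (simp add: can_jump_def)
  have S: "\<And>i i'. i < i' \<Longrightarrow> i' < length xs \<Longrightarrow> xs ! i < xs ! i'"
    using s by (simp add: sorted_wrt_iff_nth_less)
  have "jump xs j ! i < jump xs j ! i'" if "i < i'" "i' < length xs" for i i'
  proof (cases "i = j")
    case True
    then have "Suc j < length xs" "xs ! Suc j > xs ! j + 1" using c that by (auto simp: can_jump_def)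
    moreover have "xs ! Suc j \<le> xs ! i'" using S[of "Suc j" i'] that True
      by (cases "i' = Suc j") auto
    ultimately show ?thesis using True that by (simp add: jump_def)
  next
    case False
    then show ?thesis using S[of i i'] that jl
      by (cases "i' = j") (auto simp: jump_def nth_list_update)
  qed
  then show ?thesis by (simp add: sorted_wrt_iff_nth_less)
qed

lemma Qpow_bound:
  assumes "finite R"
  shows "(\<Sum>x\<in>R. \<bar>Qpow n z x\<bar>) \<le> (2 * real (length z)) ^ n"
proof (induction n arbitrary: z)
  case 0
  have "(\<Sum>x\<in>R. \<bar>Qpow 0 z x\<bar>) = (\<Sum>x\<in>R. if x = z then 1 else 0)"
    by (intro sum.cong) auto
  also have "\<dots> \<le> 1" using assms by simp
  finally show ?case by simp
next
  case (Suc n)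
  let ?L = "length z"
  have "(\<Sum>x\<in>R. \<bar>Qpow (Suc n) z x\<bar>) \<le>
        (\<Sum>x\<in>R. \<Sum>j<?L. \<bar>Qpow n (jump z j) x\<bar> + \<bar>Qpow n z x\<bar>)"
  proof (rule sum_mono)
    fix x assume "x \<in> R"
    have "\<bar>Qpow (Suc n) z x\<bar> \<le> (\<Sum>j<?L. \<bar>if can_jump z j then Qpow n (jump z j) x - Qpow n z x else 0\<bar>)"
      by (simp only: Qpow.simps) (rule sum_abs)
    also have "\<dots> \<le> (\<Sum>j<?L. \<bar>Qpow n (jump z j) x\<bar> + \<bar>Qpow n z x\<bar>)"
      by (intro sum_mono) auto
    finally show "\<bar>Qpow (Suc n) z x\<bar> \<le> (\<Sum>j<?L. \<bar>Qpow n (jump z j) x\<bar> + \<bar>Qpow n z x\<bar>)" .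
  qed
  also have "\<dots> = (\<Sum>j<?L. (\<Sum>x\<in>R. \<bar>Qpow n (jump z j) x\<bar>) + (\<Sum>x\<in>R. \<bar>Qpow n z x\<bar>))"
    by (subst sum.swap) (simp add: sum.distrib)
  also have "\<dots> \<le> (\<Sum>j<?L. (2 * real ?L) ^ n + (2 * real ?L) ^ n)"
    by (intro sum_mono add_mono) (use Suc.IH[of "jump z _"] Suc.IH[of z] in auto)
  also have "\<dots> = (2 * real ?L) ^ Suc n" by simp
  finally show ?case .
qed

lemma Qpow_has_sum:
  fixes g :: "nat \<Rightarrow> int list \<Rightarrow> real"
  assumes g0: "\<And>z. length z = N \<Longrightarrow> sorted_wrt (<) z \<Longrightarrow> g 0 z = (if z ! 0 \<ge> a then 1 else 0)"
    and gS: "\<And>n z. length z = N \<Longrightarrow> sorted_wrt (<) z \<Longrightarrow>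
              g (Suc n) z = (\<Sum>j<N. if can_jump z j then g n (jump z j) - g n z else 0)"
  shows "length z = N \<Longrightarrow> sorted_wrt (<) z \<Longrightarrow>
    ((\<lambda>x. Qpow n z x) has_sum g n z) {x. length x = N \<and> sorted_wrt (<) x \<and> x ! 0 \<ge> a}"
proof (induction n arbitrary: z)
  case 0
  show ?case
  proof (cases "z ! 0 \<ge> a")
    case True
    show ?thesis
      by (rule has_sum_finite_neutralI[of "{z}"]) (use True 0 g0 in auto)
  next
    case False
    show ?thesis
      by (subst g0) (use False 0 in \<open>auto intro!: has_sum_0\<close>)
  qed
next
  case (Suc n)
  have e: "(\<lambda>x. Qpow (Suc n) z x) = (\<lambda>x. \<Sum>j<N. if can_jump z j then Qpow n (jump z j) x - Qpow n z x else 0)"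
    using Suc.prems by simp
  show ?case unfolding e gS[OF Suc.prems]
  proof (rule has_sum_sum_fin)
    fix j assume "j \<in> {..<N}"
    show "((\<lambda>x. if can_jump z j then Qpow n (jump z j) x - Qpow n z x else 0) has_sum
          (if can_jump z j then g n (jump z j) - g n z else 0)) {x. length x = N \<and> sorted_wrt (<) x \<and> x ! 0 \<ge> a}"
    proof (cases "can_jump z j")
      case True
      have "((\<lambda>x. Qpow n (jump z j) x - Qpow n z x) has_sum (g n (jump z j) - g n z)) {x. length x = N \<and> sorted_wrt (<) x \<and> x ! 0 \<ge> a}"
        by (rule has_sum_diff') (use Suc sorted_jump[OF _ True] in auto)
      then show ?thesis using True by simp
    qed simp
  qed simp
qed


definition Amat :: "int \<Rightarrow> int list \<Rightarrow> nat \<Rightarrow> nat \<Rightarrow> real fps" where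
  "Amat a z j k = Phi (int k - int j + 1) (a - z ! j + int k)"

definition Gam :: "int \<Rightarrow> nat \<Rightarrow> int list \<Rightarrow> real fps" where
  "Gam a N z = Ldet N (Amat a z)"

lemma jump_nth_same: "j < length z \<Longrightarrow> jump z j ! j = z ! j + 1"
  by (simp add: jump_def)

lemma jump_nth_other: "i \<noteq> j \<Longrightarrow> jump z j ! i = z ! i"
  by (simp add: jump_def)

lemma Amat_deriv:
  assumes "j < length z"
  shows "fps_deriv (Amat a z j k) = Amat a (jump z j) j k - Amat a z j k"
proof -
  have e: "a - jump z j ! j + int k = (a - z ! j + int k) - 1"
    using assms by (simp add: jump_nth_same)
  show ?thesis unfolding Amat_def e Phi_deriv ..
qed

lemma Amat_other: "i \<noteq> j \<Longrightarrow> Amat a (jump z j) i = Amat a z i"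
  by (rule ext) (simp add: Amat_def jump_nth_other)

lemma Amat_upd_jump: "(Amat a z)(j := Amat a (jump z j) j) = Amat a (jump z j)"
  by (rule ext) (simp add: Amat_other)

lemma Gam_deriv:
  assumes "length z = N"
  shows "fps_deriv (Gam a N z) = (\<Sum>j<N. Gam a N (jump z j) - Gam a N z)"
proof -
  have "fps_deriv (Gam a N z) = (\<Sum>j\<in>{0..<N}. Ldet N ((Amat a z)(j := (\<lambda>k. fps_deriv (Amat a z j k)))))"
    unfolding Gam_def by (rule Ldet_deriv)
  also have "\<dots> = (\<Sum>j\<in>{0..<N}. Gam a N (jump z j) - Gam a N z)"
  proof (rule sum.cong[OF refl])
    fix j assume j: "j \<in> {0..<N}"
    then have jl: "j < length z" "j < N" using assms by auto
    have "Ldet N ((Amat a z)(j := (\<lambda>k. fps_deriv (Amat a z j k)))) =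
          Ldet N ((Amat a z)(j := (\<lambda>k. Amat a (jump z j) j k - Amat a z j k)))"
      by (simp only: Amat_deriv[OF jl(1)])
    also have "\<dots> = Ldet N ((Amat a z)(j := Amat a (jump z j) j)) - Ldet N ((Amat a z)(j := Amat a z j))"
      by (rule Ldet_diff[OF jl(2)])
    also have "\<dots> = Gam a N (jump z j) - Gam a N z"
      unfolding Amat_upd_jump Gam_def by simp
    finally show "Ldet N ((Amat a z)(j := (\<lambda>k. fps_deriv (Amat a z j k)))) = Gam a N (jump z j) - Gam a N z" .
  qed
  finally show ?thesis by (simp add: atLeast0LessThan)
qed

lemma Gam_blocked:
  assumes "Suc j < length z" "z ! Suc j = z ! j + 1" "length z = N"
  shows "Gam a N (jump z j) = Gam a N z"
proof -
  have jl: "j < length z" "j < N" "Suc j < N" using assms by auto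
  have "Amat a (jump z j) = (Amat a z)(j := (\<lambda>k. Amat a z j k + Amat a z (Suc j) k))"
  proof (rule ext)
    fix i
    show "Amat a (jump z j) i = ((Amat a z)(j := (\<lambda>k. Amat a z j k + Amat a z (Suc j) k))) i"
    proof (cases "i = j")
      case True
      have "Amat a (jump z j) j k = Amat a z j k + Amat a z (Suc j) k" for k
      proof -
        have 1: "Amat a (jump z j) j k = Phi (int k - int j + 1) (a - z ! j - 1 + int k)"
          unfolding Amat_def by (rule arg_cong2[where f = Phi]) (simp_all add: jump_nth_same jl)
        have 2: "Amat a z j k = Phi (int k - int j + 1) (a - z ! j - 1 + int k + 1)"
          unfolding Amat_def by (rule arg_cong2[where f = Phi]) simp_all
        have 3: "Amat a z (Suc j) k = Phi (int k - int j + 1 - 1) (a - z ! j - 1 + int k)"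
          unfolding Amat_def by (rule arg_cong2[where f = Phi]) (simp_all add: assms(2))
        show ?thesis unfolding 1 2 3 by (rule Phi_rec)
      qed
      then show ?thesis using True by auto
    next
      case False
      then show ?thesis by (simp add: Amat_other)
    qed
  qed
  then have "Gam a N (jump z j) = Ldet N ((Amat a z)(j := (\<lambda>k. Amat a z j k + Amat a z (Suc j) k)))"
    unfolding Gam_def by simp
  also have "\<dots> = Ldet N ((Amat a z)(j := Amat a z j)) + Ldet N ((Amat a z)(j := Amat a z (Suc j)))"
    by (rule Ldet_add[OF jl(2)])
  also have "Ldet N ((Amat a z)(j := Amat a z (Suc j))) = 0"
    by (rule Ldet_ident[of j N "Suc j"]) (use jl in auto)
  finally show ?thesis unfolding Gam_def by simp
qed

definition gam :: "int \<Rightarrow> nat \<Rightarrow> nat \<Rightarrow> int list \<Rightarrow> real" where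
  "gam a N n z = fact n * fps_nth (Gam a N z) n"

lemma gam_Suc:
  assumes "length z = N" "sorted_wrt (<) z"
  shows "gam a N (Suc n) z = (\<Sum>j<N. if can_jump z j then gam a N n (jump z j) - gam a N n z else 0)"
proof -
  have "gam a N (Suc n) z = fact n * fps_nth (fps_deriv (Gam a N z)) n"
    unfolding gam_def fps_deriv_nth by simp
  also have "\<dots> = (\<Sum>j<N. gam a N n (jump z j) - gam a N n z)"
    unfolding Gam_deriv[OF assms(1)] fps_sum_nth gam_def
    by (simp add: sum_distrib_left algebra_simps)
  also have "\<dots> = (\<Sum>j<N. if can_jump z j then gam a N n (jump z j) - gam a N n z else 0)"
  proof (rule sum.cong[OF refl])
    fix j assume j: "j \<in> {..<N}"
    show "gam a N n (jump z j) - gam a N n z = (if can_jump z j then gam a N n (jump z j) - gam a N n z else 0)"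
    proof (cases "can_jump z j")
      case False
      then have s: "Suc j < length z" "z ! Suc j \<le> z ! j + 1"
        using j assms(1) by (auto simp: can_jump_def)
      moreover have "z ! j < z ! Suc j"
        using assms(2) s(1) by (simp add: sorted_wrt_iff_nth_less)
      ultimately have "Gam a N (jump z j) = Gam a N z"
        by (intro Gam_blocked) (use assms in auto)
      then show ?thesis using False by (simp add: gam_def)
    qed simp
  qed
  finally show ?thesis .
qed

lemma sorted_ge:
  assumes "sorted_wrt (<) z" "j < length z"
  shows "z ! 0 + int j \<le> z ! j"
  using assms(2)
proof (induction j)
  case (Suc j)
  then have "z ! j < z ! Suc j" using assms(1) by (simp add: sorted_wrt_iff_nth_less)
  with Suc show ?case by simp
qed simp

lemma gam_0:
  assumes N: "1 \<le> N" and l: "length z = N" and s: "sorted_wrt (<) z"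
  shows "gam a N 0 z = (if a \<le> z ! 0 then 1 else 0)"
proof -
  let ?B = "\<lambda>j k. psi (int k - int j + 1) (a - z ! j + int k) 0"
  have rad: "\<And>i j. fps_conv_radius (Amat a z i j) = \<infinity>"
    by (simp add: Amat_def radius_Phi)
  have "gam a N 0 z = eval_fps (Gam a N z) 0"
    by (simp add: gam_def eval_fps_at_0)
  also have "\<dots> = Ldet N (\<lambda>j k. eval_fps (Amat a z j k) 0)"
  proof -
    have "fps_conv_radius (Ldet N (Amat a z)) = \<infinity> \<and>
      eval_fps (Ldet N (Amat a z)) 0 = Ldet N (\<lambda>i j. eval_fps (Amat a z i j) 0)"
      by (rule eval_Ldet) (rule rad)
    then show ?thesis unfolding Gam_def by blast
  qed
  also have "(\<lambda>j k. eval_fps (Amat a z j k) 0) = ?B"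
    by (intro ext) (simp add: eval_fps_at_0 Amat_def Phi_def)
  finally have g: "gam a N 0 z = Ldet N ?B" .
  show ?thesis
  proof (cases "a \<le> z ! 0")
    case False
    have "Ldet N ?B = 0" unfolding Ldet_def
    proof (intro sum.neutral ballI)
      fix p assume "p \<in> {p. p permutes {0..<N}}"
      have "(\<Prod>i=0..<N. ?B i (p i)) = 0"
        by (rule prod_zero) (use N False in \<open>auto intro!: bexI[of _ 0] simp: psi_def\<close>)
      then show "signof p * (\<Prod>i=0..<N. ?B i (p i)) = 0" by simp
    qed
    then show ?thesis using g False by simp
  next
    case True
    let ?A = "mat N N (\<lambda>(j, k). ?B j k)"
    have low: "?B i j = 0" if "j < i" "i < N" for i j
    proof -
      have ge: "z ! 0 + int i \<le> z ! i" using sorted_ge[OF s] that l by simp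
      define m where "m = a - z ! i + int j"
      have m: "m \<le> int 0" "int i - int j \<le> - m" using ge True that unfolding m_def by auto
      have "pochhammer (real_of_int (int j - int i + 1)) (nat (int 0 - m)) = 0"
        unfolding pochhammer_eq_0_iff
        by (rule exI[of _ "i - j - 1"]) (use m that in auto)
      then show ?thesis using m by (simp add: psi_def m_def)
    qed
    have diag: "?B i i = 1" if "i < N" for i
    proof -
      have ge: "z ! 0 + int i \<le> z ! i" using sorted_ge[OF s] that l by simp
      define m where "m = a - z ! i + int i"
      have m: "m \<le> int 0" using ge True unfolding m_def by auto
      have "pochhammer (1::real) (nat (int 0 - m)) = fact (nat (int 0 - m))"
        by (simp add: pochhammer_fact)
      then show ?thesis using m by (simp add: psi_def m_def)
    qed
    have ut: "upper_triangular ?A"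
      unfolding upper_triangular_def using low by auto
    have "Ldet N ?B = det ?A" by (simp add: Ldet_det)
    also have "\<dots> = prod_list (diag_mat ?A)"
    proof (rule det_upper_triangular[OF ut])
      show "?A \<in> carrier_mat N N" by simp
    qed
    also have "diag_mat ?A = map (\<lambda>i. 1) [0..<N]"
      unfolding diag_mat_def using diag by simp
    also have "prod_list (map (\<lambda>i. 1::real) [0..<N]) = 1"
      by (induction N) auto
    finally show ?thesis using g True by simp
  qed
qed


lemma exp_sums_real: "(\<lambda>n. (x::real) ^ n / fact n) sums exp x"
  using exp_converges[of x] by (simp add: divide_inverse mult.commute)

theorem corollary2:
  fixes N :: nat and y :: "int list" and M :: int and t :: real
  assumes "N \<ge> 1" and "length y = N" and "sorted_wrt (<) y" and "t \<ge> 0"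
  shows "((\<lambda>x. tasep_P x t y) has_sum
           det (mat N N (\<lambda>(j, k). F (int k - int j + 1) (y ! 0 - y ! j + M + int k) t)))
         {x. length x = N \<and> sorted_wrt (<) x \<and> x ! 0 \<ge> y ! 0 + M}"
proof -
  note N1 = assms(1) and ly = assms(2) and sy = assms(3) and t0 = assms(4)
  define a where "a = y ! 0 + M"
  define S where "S = {x. length x = N \<and> sorted_wrt (<) x \<and> x ! 0 \<ge> a}"
  define f where "f = (\<lambda>(n::nat, x::int list). t ^ n / fact n * Qpow n y x)"
  define c where "c = 2 * real N * t"
  have c0: "c \<ge> 0" using t0 by (simp add: c_def)
  have hs: "((\<lambda>x. Qpow n y x) has_sum gam a N n y) S" for n
    unfolding S_def
    by (rule Qpow_has_sum[where g = "gam a N"]) (use gam_0[OF N1] gam_Suc ly sy in auto)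
  have absf: "\<bar>f (n, x)\<bar> = t ^ n / fact n * \<bar>Qpow n y x\<bar>" for n x
    using t0 by (simp add: f_def abs_mult)
  have rowbound: "(\<Sum>x\<in>B. norm (f (n, x))) \<le> c ^ n / fact n" if "finite B" for B n
  proof -
    have "(\<Sum>x\<in>B. norm (f (n, x))) = (\<Sum>x\<in>B. t ^ n / fact n * \<bar>Qpow n y x\<bar>)"
      by (intro sum.cong) (simp_all add: absf)
    also have "\<dots> = t ^ n / fact n * (\<Sum>x\<in>B. \<bar>Qpow n y x\<bar>)"
      by (rule sum_distrib_left[symmetric])
    also have "\<dots> \<le> t ^ n / fact n * (2 * real N) ^ n"
      by (intro mult_left_mono) (use Qpow_bound[OF that, of n y] ly t0 in auto)
    also have "\<dots> = c ^ n / fact n" by (simp add: c_def power_mult_distrib)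
    finally show ?thesis .
  qed
  have csum: "summable (\<lambda>n. c ^ n / fact n)" by (rule summable_expo)
  have bound: "(\<Sum>p\<in>F. norm (f p)) \<le> exp c" if "finite F" for F
  proof -
    let ?A = "fst ` F" and ?B = "snd ` F"
    have fin: "finite ?A" "finite ?B" using that by auto
    have "(\<Sum>p\<in>F. norm (f p)) \<le> (\<Sum>p\<in>?A \<times> ?B. norm (f p))"
      by (rule sum_mono2) (use fin in \<open>force+\<close>)
    also have "\<dots> = (\<Sum>n\<in>?A. \<Sum>x\<in>?B. norm (f (n, x)))"
      by (simp add: sum.cartesian_product case_prod_unfold)
    also have "\<dots> \<le> (\<Sum>n\<in>?A. c ^ n / fact n)"
      by (intro sum_mono rowbound fin)
    also have "\<dots> \<le> (\<Sum>n. c ^ n / fact n)"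
      by (rule sum_le_suminf[OF csum fin(1)]) (use c0 in auto)
    also have "\<dots> = exp c" using exp_sums_real[of c] by (simp add: sums_iff)
    finally show ?thesis .
  qed
  have "f abs_summable_on (UNIV \<times> S)"
    unfolding abs_summable_iff_bdd_above
    by (rule bdd_aboveI[where M = "exp c"]) (use bound in auto)
  then have "f summable_on (UNIV \<times> S)" by (rule abs_summable_summable)
  then obtain T where hT: "(f has_sum T) (UNIV \<times> S)"
    by (auto simp: summable_on_def)
  have r1: "((\<lambda>x. f (n, x)) has_sum (t ^ n / fact n * gam a N n y)) S" if "n \<in> UNIV" for n
    unfolding f_def using has_sum_cmult_right[OF hs[of n], of "t ^ n / fact n"] by simp
  have g_has: "((\<lambda>n. t ^ n / fact n * gam a N n y) has_sum T) UNIV"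
    by (rule has_sum_SigmaD[OF hT r1])
  have c1: "((\<lambda>n. f (n, x)) has_sum tasep_P x t y) UNIV" if "x \<in> S" for x
  proof -
    have nb: "norm (f (n, x)) \<le> c ^ n / fact n" for n
      using rowbound[of "{x}" n] by simp
    have ns: "summable (\<lambda>n. norm (f (n, x)))"
      by (rule summable_comparison_test'[OF csum, where N = 0]) (use nb in simp)
    then have "summable (\<lambda>n. f (n, x))" by (rule summable_norm_cancel)
    then have "(\<lambda>n. f (n, x)) sums tasep_P x t y"
      unfolding tasep_P_def f_def by (simp add: summable_sums)
    then show ?thesis by (rule norm_summable_imp_has_sum[OF ns])
  qed
  have hT': "((\<lambda>(x, n). f (n, x)) has_sum T) (S \<times> UNIV)"
    using hT by (subst (asm) has_sum_swap) simp
  have tas: "((\<lambda>x. tasep_P x t y) has_sum T) S"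
    by (rule has_sum_SigmaD[OF hT']) (use c1 in simp)
  have rad: "\<And>i j. fps_conv_radius (Amat a y i j) = \<infinity>"
    by (simp add: Amat_def radius_Phi)
  have EL: "fps_conv_radius (Ldet N (Amat a y)) = \<infinity> \<and>
      eval_fps (Ldet N (Amat a y)) t = Ldet N (\<lambda>i j. eval_fps (Amat a y i j) t)"
    by (rule eval_Ldet) (rule rad)
  have s1: "(\<lambda>n. fps_nth (Gam a N y) n * t ^ n) sums eval_fps (Gam a N y) t"
    by (rule sums_eval_fps) (use EL in \<open>simp add: Gam_def\<close>)
  have s2: "(\<lambda>n. t ^ n / fact n * gam a N n y) sums T"
    by (rule has_sum_imp_sums[OF g_has])
  have "(\<lambda>n. t ^ n / fact n * gam a N n y) = (\<lambda>n. fps_nth (Gam a N y) n * t ^ n)"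
    by (rule ext) (simp add: gam_def)
  with s1 s2 have T: "T = eval_fps (Gam a N y) t" by (simp add: sums_unique2)
  also have "\<dots> = Ldet N (\<lambda>i j. eval_fps (Amat a y i j) t)"
    using EL by (simp add: Gam_def)
  also have "(\<lambda>i j. eval_fps (Amat a y i j) t) = (\<lambda>j k. F (int k - int j + 1) (y ! 0 - y ! j + M + int k) t)"
    by (intro ext) (simp add: Amat_def eval_Phi a_def algebra_simps)
  also have "Ldet N \<dots> = det (mat N N (\<lambda>(j, k). F (int k - int j + 1) (y ! 0 - y ! j + M + int k) t))"
    by (simp add: Ldet_det)
  finally have "T = det (mat N N (\<lambda>(j, k). F (int k - int j + 1) (y ! 0 - y ! j + M + int k) t))" .
  with tas show ?thesis unfolding S_def a_def by simp
qed


end
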